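(* For every integer $\nu\ge1$ the following identity of polynomials in $z$ holds: $$\sum_{i=0}^{2\nu-2}(-1)^iz^i\binom{2\nu-2}{i}\sum_{r=0}^{\nu}\frac{(-1)^r(-\frac32)^{\overline r}\Gamma(2\nu+\frac12-r)}{r!\,(\nu-r)!\,\Gamma(r-\frac12)\Gamma(\nu-r+\frac12)}\cdot\frac{(\frac32-r)^{\overline i}}{(\frac52-r)^{\overline i}}=\sum_{i=0}^{\nu-2}(-1)^iz^i\binom{2\nu-2}{i}\frac{(\nu-i-1)^{\overline\nu}(\frac32)^{\overline i}}{(-\frac12-i)^{\overline\nu}\,\Gamma(-\frac12)\,(\frac52)^{\overline i}}.$$
   Context: $(x)^{\overline i}=x(x+1)\cdots(x+i-1)$, $(x)^{\overline0}=1$, is the rising factorial; $\Gamma$ is the Gamma function (so $\Gamma(-\frac12)=-2\sqrt\pi$). *)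

theory Defs
  imports "HOL-Analysis.Analysis"
begin

end

theory Submission
  imports Defs "HOL-Computational_Algebra.Polynomial"
begin

lemma pascal_alt:
  fixes f :: "nat \<Rightarrow> real"
  shows "(\<Sum>r\<le>Suc n. (-1)^r * real (Suc n choose r) * f r)
       = (\<Sum>r\<le>n. (-1)^r * real (n choose r) * (f r - f (Suc r)))"
proof -
  have "(\<Sum>r\<le>Suc n. (-1)^r * real (Suc n choose r) * f r)
      = f 0 + (\<Sum>r\<le>n. (-1)^(Suc r) * real (Suc n choose Suc r) * f (Suc r))"
    by (subst sum.atMost_Suc_shift) simp
  also have "\<dots> = f 0 + (\<Sum>r\<le>n. (-1)^(Suc r) * real (n choose Suc r) * f (Suc r))
                 + (\<Sum>r\<le>n. (-1)^(Suc r) * real (n choose r) * f (Suc r))"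
    unfolding add.assoc sum.distrib[symmetric] by (intro arg_cong2[where f="(+)"] sum.cong) (auto simp: algebra_simps)
  also have "f 0 + (\<Sum>r\<le>n. (-1)^(Suc r) * real (n choose Suc r) * f (Suc r))
       = (\<Sum>r\<le>Suc n. (-1)^r * real (n choose r) * f r)"
    by (subst sum.atMost_Suc_shift) simp
  also have "\<dots> = (\<Sum>r\<le>n. (-1)^r * real (n choose r) * f r)"
    by simp
  finally show ?thesis
    by (simp add: right_diff_distrib sum_subtractf sum_negf)
qed

lemma diff_shift_degree:
  fixes p :: "real poly"
  assumes "degree p > 0"
  shows "degree (p - pcompose p [:1,1:]) < degree p"
proof -
  let ?q = "pcompose p [:1,1:]"
  have dq: "degree ?q = degree p" by (simp add: degree_pcompose)
  have lq: "lead_coeff ?q = lead_coeff p" by (simp add: lead_coeff_comp)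
  have le: "degree (p - ?q) \<le> degree p" using degree_diff_le[of p "degree p" ?q] dq by simp
  have c0: "coeff (p - ?q) (degree p) = 0" using lq dq by simp
  show ?thesis
  proof (rule ccontr)
    assume "\<not> ?thesis"
    then have d: "degree (p - ?q) = degree p" using le by simp
    then have "p - ?q = 0" using c0 by (metis leading_coeff_0_iff)
    then show False using assms d by simp
  qed
qed

lemma alt_sum_poly:
  fixes p :: "real poly"
  assumes "degree p < n"
  shows "(\<Sum>r\<le>n. (-1)^r * real (n choose r) * poly p (real r)) = 0"
  using assms
proof (induction n arbitrary: p)
  case 0 then show ?case by simp
next
  case (Suc n)
  let ?q = "p - pcompose p [:1,1:]"
  have eq: "(\<Sum>r\<le>Suc n. (-1)^r * real (Suc n choose r) * poly p (real r))
     = (\<Sum>r\<le>n. (-1)^r * real (n choose r) * poly ?q (real r))"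
    by (subst pascal_alt[of n "\<lambda>r. poly p (real r)"], intro sum.cong) (simp_all add: poly_pcompose algebra_simps)
  show ?case
  proof (cases "degree p = 0")
    case True
    then obtain c where "p = [:c:]" by (meson degree_eq_zeroE)
    then have "?q = 0" by (simp add: pcompose_pCons)
    then show ?thesis using eq by simp
  next
    case False
    then have "degree ?q < n" using diff_shift_degree[of p] Suc.prems by simp
    then show ?thesis unfolding eq by (rule Suc.IH)
  qed
qed

lemma poch_neg_nz:
  fixes a :: real
  assumes "\<forall>k::nat. a \<noteq> real k"
  shows "pochhammer (-a) m \<noteq> 0"
  using assms by (auto simp: pochhammer_eq_0_iff)

lemma alt_sum_recip:
  fixes a :: real
  assumes "\<forall>k::nat. a \<noteq> real k"
  shows "(\<Sum>r\<le>n. (-1)^r * real (n choose r) * (1 / (a - real r))) = - fact n / pochhammer (-a) (Suc n)"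
  using assms
proof (induction n arbitrary: a)
  case 0
  then show ?case by (simp add: pochhammer_rec)
next
  case (Suc n)
  have a1: "\<forall>k::nat. a - 1 \<noteq> real k"
    using Suc.prems by (metis add_diff_cancel_right' of_nat_Suc add.commute diff_eq_eq)
  have "(\<Sum>r\<le>Suc n. (-1)^r * real (Suc n choose r) * (1 / (a - real r)))
      = (\<Sum>r\<le>n. (-1)^r * real (n choose r) * (1 / (a - real r) - 1 / (a - real (Suc r))))"
    by (rule pascal_alt[of n "\<lambda>r. 1 / (a - real r)"])
  also have "\<dots> = (\<Sum>r\<le>n. (-1)^r * real (n choose r) * (1 / (a - real r)))
                 - (\<Sum>r\<le>n. (-1)^r * real (n choose r) * (1 / ((a - 1) - real r)))"
    by (simp add: right_diff_distrib sum_subtractf algebra_simps)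
  also have "\<dots> = - fact n / pochhammer (-a) (Suc n) + fact n / pochhammer (1 - a) (Suc n)"
    using Suc.IH[OF Suc.prems] Suc.IH[OF a1] by simp
  also have "\<dots> = - fact (Suc n) / pochhammer (-a) (Suc (Suc n))"
  proof -
    have n1: "pochhammer (-a) (Suc n) \<noteq> 0" using poch_neg_nz[OF Suc.prems] .
    have n2: "pochhammer (1 - a) (Suc n) \<noteq> 0" using poch_neg_nz[OF a1] by simp
    have a0: "a \<noteq> 0" using Suc.prems by (metis of_nat_0)
    have e1: "pochhammer (-a) (Suc (Suc n)) = (-a) * pochhammer (1 - a) (Suc n)"
      by (simp add: pochhammer_rec)
    have e2: "pochhammer (-a) (Suc (Suc n)) = (-a + real (Suc n)) * pochhammer (-a) (Suc n)"
      by (subst pochhammer_rec') simp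
    have n3: "pochhammer (-a) (Suc (Suc n)) \<noteq> 0" using poch_neg_nz[OF Suc.prems] .
    define P where "P = pochhammer (-a) (Suc n)"
    define Q where "Q = pochhammer (1 - a) (Suc n)"
    define R where "R = pochhammer (-a) (Suc (Suc n))"
    have h1: "- fact n / P = - fact n * (-a + real (Suc n)) / R"
      using e2 n1 n3 unfolding P_def R_def e2 by auto
    have h2: "fact n / Q = fact n * (-a) / R"
      using e1 n2 a0 unfolding Q_def R_def e1 by auto
    have "- fact n / P + fact n / Q = - fact (Suc n) / R"
      unfolding h1 h2 by (simp add: field_simps add_divide_distrib[symmetric])
    then show ?thesis unfolding P_def Q_def R_def .
  qed
  finally show ?case .
qed

lemma alt_sum_poly_frac:
  fixes a :: real and q :: "real poly"
  assumes a: "\<forall>k::nat. a \<noteq> real k" and dq: "degree q \<le> n" and n: "n \<ge> 1"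
  shows "(\<Sum>r\<le>n. (-1)^r * real (n choose r) * (poly q (real r) / (a - real r)))
         = - poly q a * fact n / pochhammer (-a) (Suc n)"
proof -
  define p where "p = q - [:poly q a:]"
  have "poly p a = 0" unfolding p_def by simp
  then obtain h where h: "p = [:-a, 1:] * h" using poly_eq_0_iff_dvd by (metis dvdE)
  have dh: "degree h < n"
  proof (cases "h = 0")
    case True then show ?thesis using n by simp
  next
    case False
    have "degree p = degree [:-a, 1:] + degree h" unfolding h by (rule degree_mult_eq) (use False in auto)
    then have "degree p = Suc (degree h)" by simp
    moreover have "degree p \<le> n" unfolding p_def using dq
      by (intro degree_diff_le) auto
    ultimately show ?thesis by simp
  qed
  have pq: "poly q (real r) / (a - real r) = poly q a * (1 / (a - real r)) - poly h (real r)" for r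
  proof -
    have "poly p (real r) = (real r - a) * poly h (real r)" unfolding h by (simp add: algebra_simps)
    then have "poly q (real r) = poly q a + (real r - a) * poly h (real r)" unfolding p_def by simp
    moreover have "a - real r \<noteq> 0" using a by auto
    ultimately show ?thesis by (simp add: field_simps)
  qed
  have "(\<Sum>r\<le>n. (-1)^r * real (n choose r) * (poly q (real r) / (a - real r)))
      = poly q a * (\<Sum>r\<le>n. (-1)^r * real (n choose r) * (1 / (a - real r)))
        - (\<Sum>r\<le>n. (-1)^r * real (n choose r) * poly h (real r))"
    unfolding pq by (simp add: sum_distrib_left right_diff_distrib sum_subtractf algebra_simps)
  also have "\<dots> = - poly q a * fact n / pochhammer (-a) (Suc n)"
    using alt_sum_recip[OF a, of n] alt_sum_poly[OF dh] by simp
  finally show ?thesis .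
qed

lemma half_ne_int: "of_int m + 1/2 \<noteq> (of_int k :: real)"
proof
  assume "of_int m + 1/2 = (of_int k :: real)"
  then have "of_int (2*m + 1) = (of_int (2*k) :: real)" by simp
  then have "2*m + 1 = 2*k" by (simp only: of_int_eq_iff)
  then show False by presburger
qed

lemma half_notin: "(x::real) = of_int m + 1/2 \<Longrightarrow> x \<notin> \<int>\<^sub>\<le>\<^sub>0"
  using half_ne_int by (metis nonpos_Ints_Int Ints_cases)

lemma half_poch_nz: "(x::real) = of_int m + 1/2 \<Longrightarrow> pochhammer x n \<noteq> 0"
  by (auto simp: pochhammer_eq_0_iff) (metis half_ne_int of_int_of_nat_eq of_int_minus)

lemma poch_ratio:
  fixes x :: real
  assumes "pochhammer (x + 1) i \<noteq> 0" "x + real i \<noteq> 0"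
  shows "pochhammer x i / pochhammer (x + 1) i = x / (x + real i)"
proof -
  have "x * pochhammer (x + 1) i = (x + real i) * pochhammer x i"
    using pochhammer_rec[of x i] pochhammer_rec'[of x i] by simp
  then show ?thesis using assms by (simp add: field_simps)
qed

lemma aux_field:
  fixes G Gr Gb c d fr fn fnr s P :: real
  assumes "G \<noteq> 0" "Gr \<noteq> 0" "Gb \<noteq> 0" "c \<noteq> 0" "d \<noteq> 0" "fr \<noteq> 0" "fn \<noteq> 0" "fnr \<noteq> 0"
  shows "((s*(Gr/G)*(P*Gb))/(fr*fnr*(c*Gr)*Gb))*((-c)/d) = (3/2)/(((-3/2)*G)*fn) * (s*(fn/(fr*fnr))*(P/d))"
  using assms by (simp add: field_simps)

lemma term_eq:
  fixes \<nu> i r :: nat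
  assumes r: "r \<le> \<nu>"
  defines "a \<equiv> real i + 3/2"
  shows "((-1)^r * pochhammer (-3/2) r * Gamma (2*real \<nu> + 1/2 - real r)) /
              (fact r * fact (\<nu>-r) * Gamma (real r - 1/2) * Gamma (real \<nu> - real r + 1/2)) *
              (pochhammer (3/2 - real r) i / pochhammer (5/2 - real r) i)
       = (3/2) / (Gamma (-1/2) * fact \<nu>) *
         ((-1)^r * real (\<nu> choose r) * (pochhammer (real \<nu> - real r + 1/2) \<nu> / (a - real r)))"
proof -
  define G where "G = Gamma (-3/2 :: real)"
  define Gr where "Gr = Gamma (real r - 3/2)"
  define Gb where "Gb = Gamma (real \<nu> - real r + 1/2)"
  define P where "P = pochhammer (real \<nu> - real r + 1/2) \<nu>"
  have nG: "G \<noteq> 0" unfolding G_def by (rule Gamma_nonzero, rule half_notin[of _ "-2"]) simp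
  have nGr: "Gr \<noteq> 0" unfolding Gr_def by (rule Gamma_nonzero, rule half_notin[of _ "int r - 2"]) simp
  have nGb: "Gb \<noteq> 0" unfolding Gb_def by (rule Gamma_nonzero, rule half_notin[of _ "int \<nu> - int r"]) (simp add: r)
  have g1: "pochhammer (-3/2) r = Gr / G"
    unfolding Gr_def G_def by (subst pochhammer_Gamma) (auto intro: half_notin[of _ "-2"] simp: algebra_simps)
  have g2: "Gamma (real r - 1/2) = (real r - 3/2) * Gr"
  proof -
    have "Gamma ((real r - 3/2) + 1) = (real r - 3/2) * Gamma (real r - 3/2)"
      by (rule Gamma_plus1, rule half_notin[of _ "int r - 2"]) simp
    then show ?thesis unfolding Gr_def by (simp add: algebra_simps)
  qed
  have g3: "Gamma (2*real \<nu> + 1/2 - real r) = P * Gb"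
  proof -
    have "P = Gamma ((real \<nu> - real r + 1/2) + real \<nu>) / Gb"
      unfolding P_def Gb_def by (rule pochhammer_Gamma, rule half_notin[of _ "int \<nu> - int r"]) (simp add: r)
    then show ?thesis using nGb by (simp add: field_simps)
  qed
  have g4: "Gamma (-1/2 :: real) = (-3/2) * G"
  proof -
    have "Gamma ((-3/2) + 1) = (-3/2) * Gamma (-3/2 :: real)"
      by (rule Gamma_plus1, rule half_notin[of _ "-2"]) simp
    then show ?thesis unfolding G_def by simp
  qed
  have ar: "a - real r \<noteq> 0" unfolding a_def using half_ne_int[of "int i + 1" "int r"] by (simp add: algebra_simps)
  have r32: "real r - 3/2 \<noteq> 0" using half_ne_int[of 1 "int r"] by (simp add: algebra_simps)
  have g5: "pochhammer (3/2 - real r) i / pochhammer (5/2 - real r) i = (3/2 - real r) / (a - real r)"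
  proof -
    have e: "3/2 - real r + 1 = 5/2 - real r" by simp
    have "pochhammer (3/2 - real r) i / pochhammer (3/2 - real r + 1) i = (3/2 - real r) / (3/2 - real r + real i)"
      by (rule poch_ratio) (use ar in \<open>auto intro!: half_poch_nz[of _ "2 - int r"] simp: a_def algebra_simps\<close>)
    then show ?thesis unfolding e a_def by (simp add: algebra_simps)
  qed
  have g7: "real (\<nu> choose r) = fact \<nu> / (fact r * fact (\<nu> - r))" by (rule binomial_fact[OF r])
  show ?thesis
    unfolding g1 g2 g3 g4 g5 g7 P_def[symmetric] Gb_def[symmetric]
    using aux_field[OF nG nGr nGb r32 ar, of "fact r" "fact \<nu>" "fact (\<nu> - r)" "(-1)^r" P]
    by (simp add: algebra_simps)
qed

lemma coeff_eq:
  fixes \<nu> i :: nat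
  assumes nu: "\<nu> \<ge> 1"
  shows "(\<Sum>r=0..\<nu>. ((-1)^r * pochhammer (-3/2) r * Gamma (2*real \<nu> + 1/2 - real r)) /
              (fact r * fact (\<nu>-r) * Gamma (real r - 1/2) * Gamma (real \<nu> - real r + 1/2)) *
              (pochhammer (3/2 - real r) i / pochhammer (5/2 - real r) i))
       = pochhammer (real \<nu> - real i - 1) \<nu> * pochhammer (3/2) i /
           (pochhammer (-1/2 - real i) \<nu> * Gamma (-1/2) * pochhammer (5/2) i)"
proof -
  define a where "a = real i + 3/2"
  define q where "q = (\<Prod>k\<in>{0..<\<nu>}. [:real \<nu> + 1/2 + real k, -1:])"
  have pq: "poly q x = pochhammer (real \<nu> + 1/2 - x) \<nu>" for x
    unfolding q_def by (simp add: poly_prod pochhammer_prod algebra_simps)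
  have dq: "degree q \<le> \<nu>"
  proof -
    have "degree q \<le> sum (degree \<circ> (\<lambda>k. [:real \<nu> + 1/2 + real k, -1 :: real:])) {0..<\<nu>}"
      unfolding q_def by (rule degree_prod_sum_le) simp
    then show ?thesis by simp
  qed
  have anat: "\<forall>k::nat. a \<noteq> real k"
  proof
    fix k :: nat
    show "a \<noteq> real k" using half_ne_int[of "int i + 1" "int k"] unfolding a_def by (simp add: algebra_simps)
  qed
  have "(\<Sum>r=0..\<nu>. ((-1)^r * pochhammer (-3/2) r * Gamma (2*real \<nu> + 1/2 - real r)) /
              (fact r * fact (\<nu>-r) * Gamma (real r - 1/2) * Gamma (real \<nu> - real r + 1/2)) *
              (pochhammer (3/2 - real r) i / pochhammer (5/2 - real r) i))
     = (\<Sum>r\<le>\<nu>. (3/2) / (Gamma (-1/2) * fact \<nu>) *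
         ((-1)^r * real (\<nu> choose r) * (poly q (real r) / (a - real r))))"
    unfolding atLeast0AtMost
    by (intro sum.cong refl, subst term_eq) (auto simp: pq a_def algebra_simps)
  also have "\<dots> = (3/2) / (Gamma (-1/2) * fact \<nu>) * (- poly q a * fact \<nu> / pochhammer (-a) (Suc \<nu>))"
    by (subst sum_distrib_left[symmetric], subst alt_sum_poly_frac[OF anat dq nu]) simp
  also have "\<dots> = pochhammer (real \<nu> - real i - 1) \<nu> * pochhammer (3/2) i /
           (pochhammer (-1/2 - real i) \<nu> * Gamma (-1/2) * pochhammer (5/2) i)"
  proof -
    have qa: "poly q a = pochhammer (real \<nu> - real i - 1) \<nu>" unfolding pq a_def by (simp add: algebra_simps)
    have pa: "pochhammer (-a) (Suc \<nu>) = (-a) * pochhammer (-1/2 - real i) \<nu>"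
    proof -
      have e: "-a + 1 = -1/2 - real i" unfolding a_def by simp
      show ?thesis by (simp only: pochhammer_rec e)
    qed
    have r35: "pochhammer (3/2) i / pochhammer (5/2) i = (3/2) / a"
    proof -
      have "pochhammer (3/2) i / pochhammer (3/2 + 1) i = (3/2) / (3/2 + real i :: real)"
        by (rule poch_ratio) (auto intro!: half_poch_nz[of _ 2] simp: add_nonneg_pos)
      then show ?thesis unfolding a_def by (simp add: algebra_simps)
    qed
    have nG: "Gamma (-1/2 :: real) \<noteq> 0" by (rule Gamma_nonzero, rule half_notin[of _ "-1"]) simp
    have n1: "pochhammer (-1/2 - real i) \<nu> \<noteq> 0" by (rule half_poch_nz[of _ "- int i - 1"]) simp
    have n2: "pochhammer (5/2 :: real) i \<noteq> 0" by (rule half_poch_nz[of _ 2]) simp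
    have a0: "a \<noteq> 0" unfolding a_def by (simp add: add_nonneg_pos)
    have "pochhammer (3/2) i = (3/2) / a * pochhammer (5/2) i" using r35 n2 by (simp add: field_simps)
    then show ?thesis unfolding qa pa using nG n1 n2 a0 by (simp add: field_simps)
  qed
  finally show ?thesis .
qed


theorem mainTheorem14:
  fixes \<nu> :: nat and z :: real
  assumes "\<nu> \<ge> 1"
  shows "(\<Sum>i=0..2*\<nu>-2. (-1)^i * z^i * real ((2*\<nu>-2) choose i) *
           (\<Sum>r=0..\<nu>. ((-1)^r * pochhammer (-3/2) r * Gamma (2*real \<nu> + 1/2 - real r)) /
              (fact r * fact (\<nu>-r) * Gamma (real r - 1/2) * Gamma (real \<nu> - real r + 1/2)) *
              (pochhammer (3/2 - real r) i / pochhammer (5/2 - real r) i)))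
       = (\<Sum>i<\<nu>-1. (-1)^i * z^i * real ((2*\<nu>-2) choose i) *
           (pochhammer (real \<nu> - real i - 1) \<nu> * pochhammer (3/2) i) /
           (pochhammer (-1/2 - real i) \<nu> * Gamma (-1/2) * pochhammer (5/2) i))"
proof -
  define F where "F i = (-1)^i * z^i * real ((2*\<nu>-2) choose i) *
           (pochhammer (real \<nu> - real i - 1) \<nu> * pochhammer (3/2) i) /
           (pochhammer (-1/2 - real i) \<nu> * Gamma (-1/2) * pochhammer (5/2) i)" for i
  have "(\<Sum>i=0..2*\<nu>-2. (-1)^i * z^i * real ((2*\<nu>-2) choose i) *
           (\<Sum>r=0..\<nu>. ((-1)^r * pochhammer (-3/2) r * Gamma (2*real \<nu> + 1/2 - real r)) /
              (fact r * fact (\<nu>-r) * Gamma (real r - 1/2) * Gamma (real \<nu> - real r + 1/2)) *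
              (pochhammer (3/2 - real r) i / pochhammer (5/2 - real r) i)))
      = (\<Sum>i=0..2*\<nu>-2. F i)"
    by (intro sum.cong refl) (subst coeff_eq[OF assms], simp add: F_def)
  also have "\<dots> = (\<Sum>i<\<nu>-1. F i)"
  proof (rule sum.mono_neutral_right)
    show "finite {0..2*\<nu>-2}" by simp
    show "{..<\<nu>-1} \<subseteq> {0..2*\<nu>-2}" by auto
    show "\<forall>i\<in>{0..2*\<nu>-2} - {..<\<nu>-1}. F i = 0"
    proof
      fix i assume i: "i \<in> {0..2*\<nu>-2} - {..<\<nu>-1}"
      then have k: "i + 1 - \<nu> < \<nu>" and e: "real \<nu> - real i - 1 = - real (i + 1 - \<nu>)"
        using assms by auto
      have "pochhammer (real \<nu> - real i - 1) \<nu> = 0"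
        unfolding pochhammer_eq_0_iff e using k by blast
      then show "F i = 0" unfolding F_def by simp
    qed
  qed
  finally show ?thesis unfolding F_def .
qed

end
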